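(* For $n\ge 1$, $i\ge 1$, $j\ge 0$, the number of plane trees with $n$ edges, exactly $i$ old leaves and exactly $j$ young leaves is $$\frac{1}{n}\binom{n}{i}\binom{n-i}{j}\binom{n-i-j}{i-1}.$$
   Context: A plane tree is a rooted tree in which the children of each vertex are linearly ordered (left to right). A leaf is a vertex with no children; by convention the tree consisting of a single vertex (no edges) has no leaves. A leaf is an old leaf if it is the leftmost child of its parent, and a young leaf otherwise. *)

theory Defs
  imports Complex_Main
begin

datatype ptree = Node "ptree list"

fun edges :: "ptree \<Rightarrow> nat" where
  "edges (Node ts) = sum_list (map (\<lambda>t. Suc (edges t)) ts)"

text \<open>A leaf is a non-root vertex with no children; it is old if it is the
  leftmost child of its parent, young otherwise. The root is never a leaf.\<close>
fun old_leaves :: "ptree \<Rightarrow> nat" where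
  "old_leaves (Node ts) =
     (case ts of [] \<Rightarrow> 0 | t # _ \<Rightarrow> (if t = Node [] then 1 else 0))
     + sum_list (map old_leaves ts)"

fun young_leaves :: "ptree \<Rightarrow> nat" where
  "young_leaves (Node ts) =
     length (filter (\<lambda>t. t = Node []) (drop 1 ts))
     + sum_list (map young_leaves ts)"

end

theory Submission imports Defs "HOL-Combinatorics.Multiset_Permutations"
begin

datatype lt = OL | YL | FI | LI

fun kids :: "ptree \<Rightarrow> ptree list" where "kids (Node cs) = cs"

lemma Node_kids[simp]: "Node (kids c) = c" by (cases c) auto
lemma kids_eq: "kids c = kids c' \<Longrightarrow> c = c'" by (metis Node_kids)
lemma kids_Nil: "kids c = [] \<longleftrightarrow> c = Node []" by (cases c) auto

lemma edges_snoc: "edges (Node (r @ [c])) = edges (Node r) + Suc (edges (Node (kids c)))"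
  by simp

lemma edges_butlast: "ts \<noteq> [] \<Longrightarrow> edges (Node ts) = edges (Node (butlast ts)) + Suc (edges (Node (kids (last ts))))"
  by (metis append_butlast_last_id edges_snoc)

function enc :: "ptree list \<Rightarrow> lt list" where
"enc ts = (if ts = [] then [] else
   if butlast ts = [] then (if kids (last ts) = [] then [OL] else FI # enc (kids (last ts)))
   else (if kids (last ts) = [] then YL # enc (butlast ts) else LI # enc (butlast ts) @ enc (kids (last ts))))"
  by pat_completeness auto
termination by (relation "measure (\<lambda>ts. edges (Node ts))") (auto simp del: edges.simps simp: edges_butlast)

declare enc.simps[simp del]

lemma enc_Nil[simp]: "enc [] = []" by (simp add: enc.simps)
lemma enc_single: "enc [c] = (if kids c = [] then [OL] else FI # enc (kids c))"
  by (subst enc.simps) simp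
lemma enc_snoc: "r \<noteq> [] \<Longrightarrow> enc (r @ [c]) = (if kids c = [] then YL # enc r else LI # enc r @ enc (kids c))"
  by (subst enc.simps) simp

lemma forest_induct:
  assumes "P []" "\<And>c. P (kids c) \<Longrightarrow> P [c]" "\<And>r c. r \<noteq> [] \<Longrightarrow> P r \<Longrightarrow> P (kids c) \<Longrightarrow> P (r @ [c])"
  shows "P ts"
proof (induction "edges (Node ts)" arbitrary: ts rule: less_induct)
  case less
  show ?case
  proof (cases ts rule: rev_exhaust)
    case Nil then show ?thesis using assms(1) by simp
  next
    case (snoc r c)
    have c: "edges (Node (kids c)) < edges (Node ts)" using snoc edges_snoc[of r c] by (simp del: edges.simps)
    show ?thesis
    proof (cases "r = []")
      case True then show ?thesis using snoc assms(2) less c by (simp del: edges.simps)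
    next
      case False
      have "edges (Node r) < edges (Node ts)" using snoc edges_snoc[of r c] by (simp del: edges.simps)
      then show ?thesis using snoc assms(3) less c False by (simp del: edges.simps)
    qed
  qed
qed

lemma old_single: "old_leaves (Node [c]) = (if kids c = [] then 1 else 0) + old_leaves (Node (kids c))"
  by (cases c) auto
lemma old_snoc: "r \<noteq> [] \<Longrightarrow> old_leaves (Node (r @ [c])) = old_leaves (Node r) + old_leaves (Node (kids c))"
  by (cases r) auto
lemma young_single: "young_leaves (Node [c]) = young_leaves (Node (kids c))"
  by (cases c) auto
lemma young_snoc: "r \<noteq> [] \<Longrightarrow> young_leaves (Node (r @ [c])) = young_leaves (Node r) + (if kids c = [] then 1 else 0) + young_leaves (Node (kids c))"
  by (cases r; cases c) auto

lemma old_Nil[simp]: "old_leaves (Node []) = 0" by simp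
lemma young_Nil[simp]: "young_leaves (Node []) = 0" by simp

lemma enc_length: "length (enc ts) = edges (Node ts)"
  by (induction ts rule: forest_induct) (auto simp: enc_single enc_snoc)
lemma enc_OL: "count_list (enc ts) OL = old_leaves (Node ts)"
  by (induction ts rule: forest_induct) (auto simp del: old_leaves.simps simp: enc_single enc_snoc old_single old_snoc)
lemma enc_YL: "count_list (enc ts) YL = young_leaves (Node ts)"
  by (induction ts rule: forest_induct) (auto simp del: young_leaves.simps simp: enc_single enc_snoc young_single young_snoc)

lemma enc_eq_Nil[simp]: "enc ts = [] \<longleftrightarrow> ts = []"
  by (cases ts rule: rev_exhaust; case_tac "ys = []") (auto simp: enc_single enc_snoc)

fun step :: "lt \<Rightarrow> int" where
  "step OL = -1" | "step YL = 0" | "step FI = 0" | "step LI = 1"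

definition psum :: "lt list \<Rightarrow> int" where "psum w = sum_list (map step w)"

lemma psum_Nil[simp]: "psum [] = 0" and psum_Cons[simp]: "psum (x # w) = step x + psum w"
  and psum_append[simp]: "psum (u @ v) = psum u + psum v"
  by (auto simp: psum_def)

lemma psum_count: "psum w = int (count_list w LI) - int (count_list w OL)"
proof (induction w)
  case (Cons x w) then show ?case by (cases x) auto
qed simp

definition valid :: "lt list \<Rightarrow> bool" where
  "valid w \<longleftrightarrow> psum w = -1 \<and> (\<forall>k<length w. psum (take k w) \<ge> 0)"

lemma valid_OL: "valid [OL]" by (auto simp: valid_def)

lemma valid_Cons0: assumes "step x = 0" shows "valid (x # v) \<longleftrightarrow> valid v"
proof
  assume v: "valid (x # v)"
  have "psum (take k v) \<ge> 0" if "k < length v" for k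
    using v that assms unfolding valid_def by (metis Suc_less_eq add_0 length_Cons psum_Cons take_Suc_Cons)
  then show "valid v" using v assms by (auto simp: valid_def)
next
  assume v: "valid v"
  have "psum (take k (x # v)) \<ge> 0" if "k < length (x # v)" for k
  proof (cases k)
    case (Suc k') then show ?thesis using v that assms by (auto simp: valid_def)
  qed simp
  then show "valid (x # v)" using v assms by (auto simp: valid_def)
qed

lemma valid_nonempty: "valid w \<Longrightarrow> w \<noteq> []" by (auto simp: valid_def)

lemma valid_LI: assumes u: "valid u" and v: "valid v" shows "valid (LI # u @ v)"
proof -
  have "psum (take k (LI # u @ v)) \<ge> 0" if "k < length (LI # u @ v)" for k
  proof (cases k)
    case (Suc k')
    show ?thesis
    proof (cases "k' < length u")
      case True then show ?thesis using Suc u by (auto simp: valid_def)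
    next
      case False
      then have "take k' (u @ v) = u @ take (k' - length u) v" by simp
      moreover have "k' - length u < length v" using that Suc False by auto
      ultimately show ?thesis using Suc u v by (auto simp: valid_def)
    qed
  qed simp
  then show ?thesis using u v by (auto simp: valid_def)
qed

lemma valid_prefix: assumes "valid u" "valid u'" "u @ v = u' @ v'" shows "u = u'"
proof -
  have *: "u = u'" if "valid u" "valid u'" "u @ v = u' @ v'" "length u \<le> length u'" for u u' v v'
  proof (cases "length u < length u'")
    case True
    have "take (length u) u' = u" using that by (metis append_eq_append_conv_if take_all_iff)
    then show ?thesis using that True by (auto simp: valid_def)
  next
    case False
    then show ?thesis using that by (metis append_eq_append_conv le_neq_implies_less)
  qed
  show ?thesis using *[of u u' v v'] *[of u' u v' v] assms by (metis nat_le_linear)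
qed

lemma valid_OL_Cons: "valid (OL # v) \<Longrightarrow> v = []"
  by (cases v) (auto simp: valid_def dest: spec[of _ 1])

lemma valid_LI_split: assumes w: "valid (LI # v)" shows "\<exists>u u'. v = u @ u' \<and> valid u \<and> valid u'"
proof -
  have tot: "psum v = -2" using w by (auto simp: valid_def)
  have pre: "psum (take s v) \<ge> -1" if "s < length v" for s
  proof -
    have "\<forall>k<length (LI # v). psum (take k (LI # v)) \<ge> 0" using w unfolding valid_def by blast
    then have "psum (take (Suc s) (LI # v)) \<ge> 0" using that by (metis Suc_mono length_Cons)
    then show ?thesis by simp
  qed
  have ex: "\<exists>k. psum (take k v) < 0" using tot by (intro exI[of _ "length v"]) simp
  define k where "k = (LEAST k. psum (take k v) < 0)"
  have k1: "psum (take k v) < 0" unfolding k_def using ex by (rule LeastI_ex)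
  have k2: "psum (take s v) \<ge> 0" if "s < k" for s
    using not_less_Least[of s "\<lambda>k. psum (take k v) < 0"] that unfolding k_def by simp
  have k0: "k \<noteq> 0" using k1 by (cases k) auto
  have kl: "k \<le> length v"
  proof (rule ccontr)
    assume "\<not> k \<le> length v"
    then have "psum (take (length v) v) \<ge> 0" using k2[of "length v"] by simp
    then show False using tot by simp
  qed
  have km: "psum (take k v) = -1"
  proof -
    obtain k' where kk: "k = Suc k'" using k0 by (cases k) auto
    have "take k v = take k' v @ [v ! k']" using kk kl by (simp add: take_Suc_conv_app_nth)
    moreover have "step (v ! k') \<ge> -1" by (cases "v ! k'") auto
    moreover have "psum (take k' v) \<ge> 0" using k2 kk by simp
    ultimately show ?thesis using k1 by simp
  qed
  have kl': "k < length v" using km tot kl by (cases "k = length v") auto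
  have vu: "valid (take k v)" using km k2 kl by (auto simp: valid_def min_def)
  have vu': "valid (drop k v)"
  proof -
    have "psum (take k v) + psum (drop k v) = -2" using tot by (metis append_take_drop_id psum_append)
    then have "psum (drop k v) = -1" using km by simp
    moreover have "psum (take t (drop k v)) \<ge> 0" if "t < length (drop k v)" for t
    proof -
      have "take (k + t) v = take k v @ take t (drop k v)" by (simp add: take_add)
      moreover have "psum (take (k + t) v) \<ge> -1" using pre that by simp
      ultimately show ?thesis using km by simp
    qed
    ultimately show ?thesis by (auto simp: valid_def)
  qed
  show ?thesis using vu vu' by (metis append_take_drop_id)
qed


lemma enc_valid: "ts \<noteq> [] \<Longrightarrow> valid (enc ts)"
proof (induction ts rule: forest_induct)
  case (2 c) then show ?case by (auto simp: enc_single valid_OL valid_Cons0)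
next
  case (3 r c) then show ?case by (auto simp: enc_snoc valid_Cons0 valid_LI)
qed simp

lemma enc_inj: "enc ts = enc ts' \<Longrightarrow> ts = ts'"
proof (induction ts arbitrary: ts' rule: forest_induct)
  case 1 then show ?case by (metis enc_eq_Nil)
next
  case (2 c)
  show ?case
  proof (cases ts' rule: rev_exhaust)
    case Nil then show ?thesis using 2 by (metis enc_eq_Nil)
  next
    case (snoc r' c')
    show ?thesis
    proof (cases "r' = []")
      case True
      then show ?thesis using 2 snoc by (auto simp: enc_single split: if_splits intro: kids_eq)
    next
      case False
      then show ?thesis using 2 snoc by (auto simp: enc_single enc_snoc split: if_splits)
    qed
  qed
next
  case (3 r c)
  show ?case
  proof (cases ts' rule: rev_exhaust)
    case Nil then show ?thesis using 3 by (metis enc_eq_Nil)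
  next
    case (snoc r' c')
    show ?thesis
    proof (cases "r' = []")
      case True
      then show ?thesis using 3 snoc by (auto simp: enc_single enc_snoc split: if_splits)
    next
      case False
      show ?thesis
      proof (cases "kids c = []")
        case True
        then show ?thesis using 3 snoc False by (auto simp: enc_snoc split: if_splits intro: kids_eq)
      next
        case kc: False
        then have kc': "kids c' \<noteq> []" using 3 snoc False by (auto simp: enc_snoc split: if_splits)
        have eq: "enc r @ enc (kids c) = enc r' @ enc (kids c')"
          using 3 snoc False kc kc' by (auto simp: enc_snoc)
        have "enc r = enc r'" using valid_prefix[OF enc_valid enc_valid eq] 3 False by simp
        moreover then have "enc (kids c) = enc (kids c')" using eq by simp
        ultimately show ?thesis using 3 snoc by (auto intro: kids_eq)
      qed
    qed
  qed
qed

lemma enc_surj: "valid w \<Longrightarrow> \<exists>ts. ts \<noteq> [] \<and> enc ts = w"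
proof (induction "length w" arbitrary: w rule: less_induct)
  case less
  obtain x v where w: "w = x # v" using valid_nonempty[OF less.prems] by (cases w) auto
  show ?case
  proof (cases x)
    case OL
    then have "v = []" using less.prems w valid_OL_Cons by simp
    then show ?thesis using w OL by (intro exI[of _ "[Node []]"]) (simp add: enc_single)
  next
    case FI
    then have "valid v" using less.prems w valid_Cons0 by simp
    then obtain ts where ts: "ts \<noteq> []" "enc ts = v" using less w by auto
    then show ?thesis using w FI by (intro exI[of _ "[Node ts]"]) (simp add: enc_single)
  next
    case YL
    then have "valid v" using less.prems w valid_Cons0 by simp
    then obtain ts where ts: "ts \<noteq> []" "enc ts = v" using less w by auto
    then show ?thesis using w YL by (intro exI[of _ "ts @ [Node []]"]) (simp add: enc_snoc)
  next
    case LI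
    then obtain u u' where uu: "v = u @ u'" "valid u" "valid u'" using less.prems w valid_LI_split by blast
    have "length u < length w" "length u' < length w" using uu w by auto
    then obtain ts cs where ts: "ts \<noteq> []" "enc ts = u" and cs: "cs \<noteq> []" "enc cs = u'"
      using less.hyps uu by meson
    show ?thesis using w LI uu ts cs by (intro exI[of _ "ts @ [Node cs]"]) (simp add: enc_snoc)
  qed
qed


lemma rot_prefix:
  assumes k: "k < length w" and t: "t \<le> length w"
  shows "psum (take t (rotate k w)) =
    (if k + t \<le> length w then psum (take (k + t) w) - psum (take k w)
     else psum w - psum (take k w) + psum (take (k + t - length w) w))"
proof -
  have r: "rotate k w = drop k w @ take k w" using k by (simp add: rotate_drop_take)
  show ?thesis
  proof (cases "k + t \<le> length w")
    case True
    have "take t (rotate k w) = take t (drop k w)" using True r by simp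
    moreover have "take (k + t) w = take k w @ take t (drop k w)" by (simp add: take_add)
    ultimately show ?thesis using True by simp
  next
    case False
    have e: "t - (length w - k) = k + t - length w" "k + t - length w \<le> k" using False k t by auto
    have "take t (rotate k w) = drop k w @ take (k + t - length w) w" using False r k t
      by (simp add: e min_def)
    moreover have "psum w = psum (take k w) + psum (drop k w)" by (metis append_take_drop_id psum_append)
    ultimately show ?thesis using False by simp
  qed
qed

lemma psum_rotate: "psum (rotate k w) = psum w"
  by (simp add: rotate_drop_take) (metis add.commute append_take_drop_id psum_append)

lemma valid_rot_iff:
  assumes k: "k < length w" and tot: "psum w = -1"
  shows "valid (rotate k w) \<longleftrightarrow>
     (\<forall>s<length w. psum (take k w) \<le> psum (take s w)) \<and> (\<forall>s<k. psum (take k w) < psum (take s w))"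
  (is "?L \<longleftrightarrow> ?A \<and> ?B")
proof
  assume L: ?L
  have pre: "psum (take t (rotate k w)) \<ge> 0" if "t < length w" for t
    using L that unfolding valid_def by simp
  have B: ?B
  proof (intro allI impI)
    fix s assume s: "s < k"
    show "psum (take k w) < psum (take s w)"
    proof (cases "s = 0")
      case True
      have "psum (take (length w - k) (rotate k w)) \<ge> 0" using pre[of "length w - k"] s k by simp
      then show ?thesis using rot_prefix[of k w "length w - k"] k tot True by simp
    next
      case False
      have "psum (take (length w - k + s) (rotate k w)) \<ge> 0" using pre[of "length w - k + s"] s k by simp
      then show ?thesis using rot_prefix[of k w "length w - k + s"] k tot False s by simp
    qed
  qed
  have A: ?A
  proof (intro allI impI)
    fix s assume s: "s < length w"
    show "psum (take k w) \<le> psum (take s w)"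
    proof (cases "s < k")
      case True then show ?thesis using B by force
    next
      case False
      have "psum (take (s - k) (rotate k w)) \<ge> 0" using pre[of "s - k"] s by simp
      then show ?thesis using rot_prefix[of k w "s - k"] k False s by simp
    qed
  qed
  show "?A \<and> ?B" using A B by simp
next
  assume AB: "?A \<and> ?B"
  have "psum (take t (rotate k w)) \<ge> 0" if t: "t < length w" for t
  proof (cases "k + t \<le> length w")
    case True
    show ?thesis
    proof (cases "k + t = length w")
      case True
      then have "k > 0" using t by simp
      then have "psum (take k w) < 0" using AB by force
      then show ?thesis using rot_prefix[of k w t] k t True tot by simp
    next
      case False
      then show ?thesis using rot_prefix[of k w t] k t True AB by simp
    qed
  next
    case False
    have "k + t - length w < k" using t False by simp
    then have "psum (take k w) < psum (take (k + t - length w) w)" using AB by blast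
    then show ?thesis using rot_prefix[of k w t] k t False tot by simp
  qed
  then show ?L using tot psum_rotate[of k w] unfolding valid_def by simp
qed

lemma unique_rot:
  assumes n: "length w = n" "n \<ge> 1" and tot: "psum w = -1"
  shows "card {k. k < n \<and> valid (rotate k w)} = 1"
proof -
  define p where "p s = psum (take s w)" for s
  have ex: "\<exists>k. k < n \<and> (\<forall>s<n. p k \<le> p s)"
  proof -
    have "0 \<in> {..<n}" using n by simp
    then have fin: "finite (p ` {..<n})" "p ` {..<n} \<noteq> {}" by auto
    obtain k where "k < n" "p k = Min (p ` {..<n})" using Min_in[OF fin] by auto
    then show ?thesis using fin by (intro exI[of _ k]) auto
  qed
  define k where "k = (LEAST k. k < n \<and> (\<forall>s<n. p k \<le> p s))"
  have k1: "k < n \<and> (\<forall>s<n. p k \<le> p s)" unfolding k_def using ex by (rule LeastI_ex)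
  have k2: "p k < p s" if sk: "s < k" for s
  proof -
    have nm: "\<not> (s < n \<and> (\<forall>s'<n. p s \<le> p s'))"
      using not_less_Least[of s "\<lambda>k. k < n \<and> (\<forall>s<n. p k \<le> p s)"] sk unfolding k_def by blast
    have "s < n" using sk k1 by simp
    then obtain s' where "s' < n" "p s' < p s" using nm by (auto simp: not_le)
    then show ?thesis using k1 by force
  qed
  have "{k. k < n \<and> valid (rotate k w)} = {k}"
  proof (intro equalityI subsetI)
    fix k' assume "k' \<in> {k. k < n \<and> valid (rotate k w)}"
    then have k': "k' < n" "\<forall>s<n. p k' \<le> p s" "\<forall>s<k'. p k' < p s"
      using valid_rot_iff[of k' w] n tot unfolding p_def by auto
    show "k' \<in> {k}"
    proof (rule ccontr)
      assume "k' \<notin> {k}"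
      then have "k' < k \<or> k < k'" by auto
      then show False
      proof
        assume "k' < k" then show False using k2[of k'] k'(2) k1 by force
      next
        assume kk: "k < k'" then show False using k'(3)[rule_format, OF kk] k1 k'(1) by force
      qed
    qed
  next
    fix k' assume "k' \<in> {k}"
    then show "k' \<in> {k. k < n \<and> valid (rotate k w)}"
      using valid_rot_iff[of k w] n tot k1 k2 unfolding p_def by auto
  qed
  then show ?thesis by simp
qed


lemma double_count:
  assumes fin: "finite S" and n: "n \<ge> 1" and len: "\<And>w. w \<in> S \<Longrightarrow> length w = n"
    and rot: "\<And>w k. w \<in> S \<Longrightarrow> rotate k w \<in> S"
    and one: "\<And>w. w \<in> S \<Longrightarrow> card {k. k < n \<and> valid (rotate k w)} = 1"
  shows "card S = n * card {w \<in> S. valid w}"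
proof -
  have cnt: "card {k. k < n \<and> P k} = (\<Sum>k<n. if P k then 1 else 0)" for P :: "nat \<Rightarrow> bool"
  proof -
    have "{k. k < n \<and> P k} = {k \<in> {..<n}. P k}" by auto
    then show ?thesis by (simp add: sum.inter_filter[symmetric])
  qed
  have cnt2: "card {w \<in> S. P w} = (\<Sum>w\<in>S. if P w then 1 else 0)" for P
    using fin by (simp add: sum.inter_filter[symmetric])
  have eqV: "card {w \<in> S. valid (rotate k w)} = card {w \<in> S. valid w}" if k: "k < n" for k
  proof -
    have inj: "inj_on (rotate k) {w \<in> S. valid (rotate k w)}"
      using inj_fn[OF inj_rotate1, of k] unfolding rotate_def by (auto intro: inj_on_subset)
    have "rotate k ` {w \<in> S. valid (rotate k w)} = {w \<in> S. valid w}"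
    proof (intro equalityI subsetI)
      fix v assume "v \<in> rotate k ` {w \<in> S. valid (rotate k w)}"
      then show "v \<in> {w \<in> S. valid w}" using rot by auto
    next
      fix v assume v: "v \<in> {w \<in> S. valid w}"
      have "rotate k (rotate (n - k) v) = v" using k len v by (simp add: rotate_rotate)
      moreover have "rotate (n - k) v \<in> S" using v rot by auto
      ultimately show "v \<in> rotate k ` {w \<in> S. valid (rotate k w)}" using v
        by (metis (mono_tags, lifting) image_eqI mem_Collect_eq)
    qed
    then show ?thesis using card_image[OF inj] by simp
  qed
  have "card S = (\<Sum>w\<in>S. card {k. k < n \<and> valid (rotate k w)})" using one by simp
  also have "\<dots> = (\<Sum>w\<in>S. \<Sum>k<n. if valid (rotate k w) then 1 else 0)" by (simp add: cnt)
  also have "\<dots> = (\<Sum>k<n. \<Sum>w\<in>S. if valid (rotate k w) then 1 else 0)" by (rule sum.swap)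
  also have "\<dots> = (\<Sum>k<n. card {w \<in> S. valid (rotate k w)})" by (simp add: cnt2)
  also have "\<dots> = (\<Sum>k<n. card {w \<in> S. valid w})" by (simp add: eqV)
  finally show ?thesis by simp
qed

lemma length_count: "length w = count_list w OL + count_list w YL + count_list w FI + count_list w LI"
proof (induction w)
  case (Cons x w) then show ?case by (cases x) auto
qed simp

lemma count_rotate: "count_list (rotate k w) x = count_list w x"
  by (simp add: rotate_drop_take) (metis add.commute append_take_drop_id count_list_append)

lemma UNIV_lt: "(UNIV :: lt set) = {OL, YL, FI, LI}"
  using lt.exhaust by auto

lemma finite_lt: "finite (UNIV :: lt set)" by (simp add: UNIV_lt)

lemma all_lt: "(\<forall>x::lt. P x) \<longleftrightarrow> P OL \<and> P YL \<and> P FI \<and> P LI"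
  by (metis lt.exhaust)

lemma card_words:
  assumes i: "i \<ge> 1"
  shows "card {w. length w = n \<and> count_list w OL = i \<and> count_list w YL = j \<and> count_list w LI = i - 1}
     = (n choose i) * ((n - i) choose j) * ((n - i - j) choose (i - 1))"
    (is "card ?S = ?P")
proof (cases "i + j + (i - 1) \<le> n")
  case True
  define d where "d = n - i - j - (i - 1)"
  define M where "M = replicate_mset i OL + replicate_mset j YL + replicate_mset (i - 1) LI + replicate_mset d FI"
  have S: "?S = permutations_of_multiset M"
  proof (intro equalityI subsetI)
    fix w assume "w \<in> ?S"
    then have "count_list w FI = d" using length_count[of w] unfolding d_def by auto
    then have "mset w = M" using \<open>w \<in> ?S\<close> unfolding M_def
      by (auto simp: multiset_eq_iff all_lt count_mset)
    then show "w \<in> permutations_of_multiset M" by (rule permutations_of_multisetI)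
  next
    fix w assume "w \<in> permutations_of_multiset M"
    then have "mset w = M" by (rule permutations_of_multisetD)
    then have c: "count_list w x = count M x" for x by (metis count_mset)
    then have "length w = i + j + d + (i - 1)" using length_count[of w] unfolding M_def by simp
    then show "w \<in> ?S" using c True unfolding M_def d_def by auto
  qed
  have sz: "size M = n" unfolding M_def d_def using True by simp
  have pr: "(\<Prod>x\<in>set_mset M. fact (count M x)) = (fact i * fact j * fact (i - 1) * fact d :: nat)"
  proof -
    have "(\<Prod>x\<in>set_mset M. fact (count M x)) = (\<Prod>x\<in>UNIV. fact (count M x) :: nat)"
      by (rule prod.mono_neutral_left) (auto simp: finite_lt not_in_iff)
    also have "\<dots> = fact i * fact j * fact (i - 1) * fact d"
      unfolding UNIV_lt M_def by simp
    finally show ?thesis .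
  qed
  have c1: "card ?S * (fact i * fact j * fact (i - 1) * fact d) = (fact n :: nat)"
    using card_permutations_of_multiset_aux[of M] S sz pr by simp
  have b1: "fact i * fact (n - i) * (n choose i) = (fact n :: nat)" using True by (intro binomial_fact_lemma) simp
  have b2: "fact j * fact (n - i - j) * ((n - i) choose j) = (fact (n - i) :: nat)" using True
    by (metis binomial_fact_lemma diff_diff_left le_diff_conv add.commute le_add1 order_trans add_le_cancel_left)
  have b3: "fact (i - 1) * fact d * ((n - i - j) choose (i - 1)) = (fact (n - i - j) :: nat)" using True
    unfolding d_def by (intro binomial_fact_lemma) simp
  have "?P * (fact i * fact j * fact (i - 1) * fact d) = (fact n :: nat)"
  proof -
    have "?P * (fact i * fact j * fact (i - 1) * fact d) =
      (fact i * (n choose i)) * (fact j * ((n - i) choose j) * (fact (i - 1) * fact d * ((n - i - j) choose (i - 1))))"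
      by (simp add: algebra_simps)
    also have "\<dots> = (fact i * (n choose i)) * (fact j * ((n - i) choose j) * fact (n - i - j))" by (simp only: b3)
    also have "\<dots> = (fact i * (n choose i)) * fact (n - i)" using b2 by (simp add: algebra_simps)
    also have "\<dots> = fact n" using b1 by (simp add: algebra_simps)
    finally show ?thesis .
  qed
  then have "card ?S * (fact i * fact j * fact (i - 1) * fact d) = ?P * (fact i * fact j * fact (i - 1) * fact d)"
    using c1 by simp
  moreover have "(fact i * fact j * fact (i - 1) * fact d :: nat) \<noteq> 0" by simp
  ultimately show ?thesis by simp
next
  case False
  have "?S = {}"
  proof (intro equalityI subsetI)
    fix w assume "w \<in> ?S"
    then show "w \<in> {}" using length_count[of w] False by auto
  qed simp
  moreover have "?P = 0"
  proof (cases "i \<le> n")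
    case i2: True
    show ?thesis
    proof (cases "j \<le> n - i")
      case True
      then have "n - i - j < i - 1" using False i2 by simp
      then show ?thesis by simp
    next
      case False then show ?thesis by simp
    qed
  next
    case False then show ?thesis by simp
  qed
  ultimately show ?thesis by (simp only: card.empty)
qed


theorem mainTheorem2:
  fixes n i j :: nat
  assumes "n \<ge> 1" and "i \<ge> 1"
  shows "real (card {t. edges t = n \<and> old_leaves t = i \<and> young_leaves t = j})
         = (1 / real n) * real (n choose i) * real ((n - i) choose j)
             * real ((n - i - j) choose (i - 1))"
proof -
  define T where "T = {t. edges t = n \<and> old_leaves t = i \<and> young_leaves t = j}"
  define S where "S = {w. length w = n \<and> count_list w OL = i \<and> count_list w YL = j \<and> count_list w LI = i - 1}"
  define V where "V = {w \<in> S. valid w}"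
  have bij: "bij_betw (\<lambda>t. enc (kids t)) T V"
    unfolding bij_betw_def
  proof
    show "inj_on (\<lambda>t. enc (kids t)) T" by (auto intro!: inj_onI kids_eq enc_inj)
    show "(\<lambda>t. enc (kids t)) ` T = V"
    proof (intro equalityI subsetI)
      fix w assume "w \<in> (\<lambda>t. enc (kids t)) ` T"
      then obtain t where t: "t \<in> T" "w = enc (kids t)" by auto
      have tt: "Node (kids t) = t" by simp
      have ne: "kids t \<noteq> []" using t assms unfolding T_def by (cases t) auto
      have v: "valid w" using enc_valid[OF ne] t by simp
      have tp: "edges t = n" "old_leaves t = i" "young_leaves t = j" using t unfolding T_def by auto
      have l: "length w = n" "count_list w OL = i" "count_list w YL = j"
        using enc_length[of "kids t"] enc_OL[of "kids t"] enc_YL[of "kids t"] tp t(2) by (simp_all only: tt)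
      have "psum w = -1" using v by (simp add: valid_def)
      then have "count_list w LI = i - 1" using psum_count[of w] l assms by simp
      then show "w \<in> V" using v l unfolding V_def S_def by simp
    next
      fix w assume "w \<in> V"
      then have w: "valid w" "length w = n" "count_list w OL = i" "count_list w YL = j"
        unfolding V_def S_def by auto
      obtain ts where ts: "ts \<noteq> []" "enc ts = w" using enc_surj[OF w(1)] by auto
      have "Node ts \<in> T" using w ts enc_length[of ts] enc_OL[of ts] enc_YL[of ts] unfolding T_def
        by (simp del: edges.simps old_leaves.simps young_leaves.simps)
      then show "w \<in> (\<lambda>t. enc (kids t)) ` T" using ts by force
    qed
  qed
  have cT: "card T = card V" using bij_betw_same_card[OF bij] .
  have finS: "finite S"
  proof (rule finite_subset)
    show "S \<subseteq> {w. set w \<subseteq> UNIV \<and> length w = n}" unfolding S_def by auto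
    show "finite {w. set w \<subseteq> (UNIV :: lt set) \<and> length w = n}" by (rule finite_lists_length_eq) (rule finite_lt)
  qed
  have "card S = n * card V" unfolding V_def
  proof (rule double_count[OF finS assms(1)])
    show "length w = n" if "w \<in> S" for w using that unfolding S_def by simp
    show "rotate k w \<in> S" if "w \<in> S" for w k using that unfolding S_def by (simp add: count_rotate)
    show "card {k. k < n \<and> valid (rotate k w)} = 1" if "w \<in> S" for w
    proof (rule unique_rot[OF _ assms(1)])
      show "length w = n" using that unfolding S_def by simp
      show "psum w = -1" using that assms psum_count[of w] unfolding S_def by simp
    qed
  qed
  then have "real (card T) = real (card S) / real n" using cT assms by simp
  also have "\<dots> = (1 / real n) * real (n choose i) * real ((n - i) choose j) * real ((n - i - j) choose (i - 1))"
    using card_words[OF assms(2), of n j] unfolding S_def by simp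
  finally show ?thesis unfolding T_def .
qed

end
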